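(* Let $T$ be an unmixed balanced tree of height 3, labeled as in the context. Then every facet of $\mathcal{S}_{even}(T)$ has the form $V_{even}\setminus\{u_{1,a_1},\dots,u_{p,a_p}\}$ with $1\le a_i\le k_i$, and ordering the facets $F$ of $\mathcal{S}_{even}(T)$ by the order $<_P$ of their vectors $\nu(F)=(a_1,\dots,a_p)$ gives a shelling of $\mathcal{S}_{even}(T)$.
   Context: $N(v)=\{u:uv\in E\}$, $N(D)=\bigcup_{v\in D}N(v)$. A leaf is a vertex of degree 1; height of a vertex = minimum distance to a leaf; $V_k$ = vertices of height $k$; $V_{even}$, $V_{odd}$ = vertices of even/odd height; $T$ is balanced if no two adjacent vertices have the same height. A TD-set is $D$ with $N(D)=V$, minimal if no proper subset is; $T$ unmixed if all minimal TD-sets have equal size. An odd-TD-set is $D$ with $N(D)\supseteq V_{odd}$, minimal if no proper subset is one; $\mathcal{S}_{even}(T)$ is the simplicial complex on $V_{even}$ whose facets are $V_{even}\setminus D$, $D$ a minimal odd-TD-set. Labeling: in an unmixed balanced tree of height 3, each height-1 vertex has exactly one neighbor of height 2 and vice versa; write $V_1=\{s_1,\dots,s_p\}$, let $u_{i,1}$ be the unique height-2 neighbor of $s_i$ (so $V_2=\{u_{1,1},\dots,u_{p,1}\}$), $k_i=|N(s_i)|$, and $\{u_{i,2},\dots,u_{i,k_i}\}=N(s_i)\cap V_0$. For $\alpha=(a_1,\dots,a_p)$ let $\ell(\alpha)=|\{i: a_i=1\}|$; define $\alpha<_P\beta$ iff $\ell(\alpha)>\ell(\beta)$, or $\ell(\alpha)=\ell(\beta)$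 and $\alpha$ is lexicographically smaller than $\beta$. A pure simplicial complex is shelled by an ordering $F_1,\dots,F_m$ of its facets if for all $1\le i<j\le m$ there exist $v\in F_j\setminus F_i$ and $k<j$ with $F_j\setminus F_k=\{v\}$. *)

theory Defs
  imports Main
begin

definition simple_graph :: "'a set \<Rightarrow> 'a set set \<Rightarrow> bool" where
  "simple_graph V E \<longleftrightarrow> finite V \<and>
     (\<forall>e\<in>E. \<exists>x y. x \<noteq> y \<and> e = {x, y} \<and> x \<in> V \<and> y \<in> V)"

definition walk :: "'a set set \<Rightarrow> 'a list \<Rightarrow> bool" where
  "walk E xs \<longleftrightarrow> xs \<noteq> [] \<and> (\<forall>i. i + 1 < length xs \<longrightarrow> {xs ! i, xs ! (i + 1)} \<in> E)"

definition connected_graph :: "'a set \<Rightarrow> 'a set set \<Rightarrow> bool" where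
  "connected_graph V E \<longleftrightarrow>
     (\<forall>x\<in>V. \<forall>y\<in>V. \<exists>xs. walk E xs \<and> set xs \<subseteq> V \<and> hd xs = x \<and> last xs = y)"

definition has_cycle :: "'a set set \<Rightarrow> bool" where
  "has_cycle E \<longleftrightarrow>
     (\<exists>xs. 3 \<le> length xs \<and> distinct xs \<and> walk E xs \<and> {last xs, hd xs} \<in> E)"

definition is_tree :: "'a set \<Rightarrow> 'a set set \<Rightarrow> bool" where
  "is_tree V E \<longleftrightarrow> simple_graph V E \<and> V \<noteq> {} \<and> connected_graph V E \<and> \<not> has_cycle E"

definition gdist :: "'a set set \<Rightarrow> 'a \<Rightarrow> 'a \<Rightarrow> nat" where
  "gdist E x y = (LEAST n. \<exists>xs. walk E xs \<and> hd xs = x \<and> last xs = y \<and> length xs = n + 1)"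

definition nbhd :: "'a set set \<Rightarrow> 'a \<Rightarrow> 'a set" where
  "nbhd E v = {u. {u, v} \<in> E}"

definition nbhd_set :: "'a set set \<Rightarrow> 'a set \<Rightarrow> 'a set" where
  "nbhd_set E D = (\<Union>v\<in>D. nbhd E v)"

definition is_leaf :: "'a set \<Rightarrow> 'a set set \<Rightarrow> 'a \<Rightarrow> bool" where
  "is_leaf V E v \<longleftrightarrow> v \<in> V \<and> card (nbhd E v) = 1"

definition vheight :: "'a set \<Rightarrow> 'a set set \<Rightarrow> 'a \<Rightarrow> nat" where
  "vheight V E v = (LEAST n. \<exists>l. is_leaf V E l \<and> gdist E v l = n)"

definition tree_height :: "'a set \<Rightarrow> 'a set set \<Rightarrow> nat" where
  "tree_height V E = Max (vheight V E ` V)"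

definition level :: "'a set \<Rightarrow> 'a set set \<Rightarrow> nat \<Rightarrow> 'a set" where
  "level V E k = {v \<in> V. vheight V E v = k}"

definition V_even :: "'a set \<Rightarrow> 'a set set \<Rightarrow> 'a set" where
  "V_even V E = {v \<in> V. even (vheight V E v)}"

definition V_odd :: "'a set \<Rightarrow> 'a set set \<Rightarrow> 'a set" where
  "V_odd V E = {v \<in> V. odd (vheight V E v)}"

definition balanced :: "'a set \<Rightarrow> 'a set set \<Rightarrow> bool" where
  "balanced V E \<longleftrightarrow> (\<forall>x y. {x, y} \<in> E \<longrightarrow> vheight V E x \<noteq> vheight V E y)"

definition TD_set :: "'a set \<Rightarrow> 'a set set \<Rightarrow> 'a set \<Rightarrow> bool" where
  "TD_set V E D \<longleftrightarrow> D \<subseteq> V \<and> nbhd_set E D = V"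

definition minimal_TD_set :: "'a set \<Rightarrow> 'a set set \<Rightarrow> 'a set \<Rightarrow> bool" where
  "minimal_TD_set V E D \<longleftrightarrow> TD_set V E D \<and> (\<forall>D'. D' \<subset> D \<longrightarrow> \<not> TD_set V E D')"

definition unmixed :: "'a set \<Rightarrow> 'a set set \<Rightarrow> bool" where
  "unmixed V E \<longleftrightarrow>
     (\<forall>D1 D2. minimal_TD_set V E D1 \<longrightarrow> minimal_TD_set V E D2 \<longrightarrow> card D1 = card D2)"

definition odd_TD_set :: "'a set \<Rightarrow> 'a set set \<Rightarrow> 'a set \<Rightarrow> bool" where
  "odd_TD_set V E D \<longleftrightarrow> D \<subseteq> V \<and> V_odd V E \<subseteq> nbhd_set E D"

definition minimal_odd_TD_set :: "'a set \<Rightarrow> 'a set set \<Rightarrow> 'a set \<Rightarrow> bool" where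
  "minimal_odd_TD_set V E D \<longleftrightarrow> odd_TD_set V E D \<and> (\<forall>D'. D' \<subset> D \<longrightarrow> \<not> odd_TD_set V E D')"

definition S_even_facets :: "'a set \<Rightarrow> 'a set set \<Rightarrow> 'a set set" where
  "S_even_facets V E = {V_even V E - D | D. minimal_odd_TD_set V E D}"

text \<open>Vectors alpha = (a_1,...,a_p) are functions nat => nat, only indices 1..p matter.\<close>
definition ell :: "nat \<Rightarrow> (nat \<Rightarrow> nat) \<Rightarrow> nat" where
  "ell p a = card {i \<in> {1..p}. a i = 1}"

definition lex_less :: "nat \<Rightarrow> (nat \<Rightarrow> nat) \<Rightarrow> (nat \<Rightarrow> nat) \<Rightarrow> bool" where
  "lex_less p a b \<longleftrightarrow> (\<exists>j\<in>{1..p}. (\<forall>i\<in>{1..<j}. a i = b i) \<and> a j < b j)"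

definition P_less :: "nat \<Rightarrow> (nat \<Rightarrow> nat) \<Rightarrow> (nat \<Rightarrow> nat) \<Rightarrow> bool" where
  "P_less p a b \<longleftrightarrow> ell p a > ell p b \<or> (ell p a = ell p b \<and> lex_less p a b)"

definition shelling_order :: "'a set list \<Rightarrow> bool" where
  "shelling_order Fs \<longleftrightarrow>
     (\<forall>i j. i < j \<and> j < length Fs \<longrightarrow>
        (\<exists>v \<in> Fs ! j - Fs ! i. \<exists>k < j. Fs ! j - Fs ! k = {v}))"

end

theory Submission
  imports Defs
begin


lemma lex_cong1: assumes "\<forall>i\<in>{1..p}. a i = a' i" "\<forall>i\<in>{1..p}. b i = b' i" "lex_less p a b"
  shows "lex_less p a' b'"
proof -
  obtain j where j: "j \<in> {1..p}" "\<forall>i\<in>{1..<j}. a i = b i" "a j < b j"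
    using assms(3) unfolding lex_less_def by blast
  have "\<forall>i\<in>{1..<j}. a' i = b' i"
  proof
    fix i assume i: "i \<in> {1..<j}"
    then have "i \<in> {1..p}" using j(1) by auto
    then have "a' i = a i" "b' i = b i" using assms(1,2) by auto
    moreover have "a i = b i" using j(2) i by blast
    ultimately show "a' i = b' i" by simp
  qed
  moreover have "a' j < b' j" using assms(1,2) j(1,3) by auto
  ultimately show ?thesis unfolding lex_less_def using j(1) by blast
qed

lemma P_less_cong: assumes "\<forall>i\<in>{1..p}. a i = a' i" "\<forall>i\<in>{1..p}. b i = b' i"
  shows "P_less p a b = P_less p a' b'"
proof -
  have "ell p a = ell p a'" "ell p b = ell p b'" unfolding ell_def using assms
    by (metis (mono_tags, lifting) Collect_cong)+
  moreover have "lex_less p a b = lex_less p a' b'" using lex_cong1[OF assms] lex_cong1[of p a' a b' b] assms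
    by auto
  ultimately show ?thesis unfolding P_less_def by simp
qed

lemma lex_irrefl: "\<not> lex_less p a a" unfolding lex_less_def by simp

lemma lex_trans: assumes "lex_less p a b" "lex_less p b c" shows "lex_less p a c"
proof -
  obtain j1 where j1: "j1 \<in> {1..p}" "\<forall>i\<in>{1..<j1}. a i = b i" "a j1 < b j1"
    using assms(1) unfolding lex_less_def by blast
  obtain j2 where j2: "j2 \<in> {1..p}" "\<forall>i\<in>{1..<j2}. b i = c i" "b j2 < c j2"
    using assms(2) unfolding lex_less_def by blast
  show ?thesis unfolding lex_less_def
  proof (intro bexI[of _ "min j1 j2"] conjI ballI)
    show "min j1 j2 \<in> {1..p}" using j1 j2 by (auto simp: min_def)
    fix i assume "i \<in> {1..<min j1 j2}"
    then show "a i = c i" using j1(2) j2(2) by auto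
  next
    show "a (min j1 j2) < c (min j1 j2)"
    proof (cases j1 j2 rule: linorder_cases)
      case less then show ?thesis using j1 j2 by (auto simp: min_def)
    next
      case equal then show ?thesis using j1 j2 by (auto simp: min_def)
    next
      case greater then show ?thesis using j1 j2 by (auto simp: min_def)
    qed
  qed
qed

lemma lex_total: assumes "\<exists>i\<in>{1..p}. a i \<noteq> b i" shows "lex_less p a b \<or> lex_less p b a"
proof -
  define j where "j = (LEAST i. i \<in> {1..p} \<and> a i \<noteq> b i)"
  have "\<exists>i. i \<in> {1..p} \<and> a i \<noteq> b i" using assms by blast
  then have "j \<in> {1..p} \<and> a j \<noteq> b j" unfolding j_def by (rule LeastI_ex)
  then have j: "j \<in> {1..p}" "a j \<noteq> b j" by auto
  have lt: "\<forall>i\<in>{1..<j}. a i = b i"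
  proof
    fix i assume i: "i \<in> {1..<j}"
    then have "\<not> (i \<in> {1..p} \<and> a i \<noteq> b i)" unfolding j_def using not_less_Least by auto
    then show "a i = b i" using i j by auto
  qed
  show ?thesis
  proof (cases "a j < b j")
    case True then show ?thesis unfolding lex_less_def using j lt by blast
  next
    case False then have "b j < a j" using j by simp
    moreover have "\<forall>i\<in>{1..<j}. b i = a i" using lt by simp
    ultimately have "lex_less p b a" unfolding lex_less_def using j(1) by blast
    then show ?thesis by simp
  qed
qed

lemma P_irrefl: "\<not> P_less p a a" unfolding P_less_def using lex_irrefl by auto

lemma P_trans: "P_less p a b \<Longrightarrow> P_less p b c \<Longrightarrow> P_less p a c"
  unfolding P_less_def using lex_trans[of p a b c] by auto

lemma P_asym: "P_less p a b \<Longrightarrow> \<not> P_less p b a"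
  using P_trans P_irrefl by blast

lemma P_total: "\<exists>i\<in>{1..p}. a i \<noteq> b i \<Longrightarrow> P_less p a b \<or> P_less p b a"
  unfolding P_less_def using lex_total[of p a b] by auto

lemma sort_exists:
  assumes "finite A" "\<forall>x\<in>B. \<not> R x x" "\<forall>x\<in>B. \<forall>y\<in>B. \<forall>z\<in>B. R x y \<longrightarrow> R y z \<longrightarrow> R x z"
    "\<forall>x\<in>B. \<forall>y\<in>B. x \<noteq> y \<longrightarrow> R x y \<or> R y x" "A \<subseteq> B"
  shows "\<exists>xs. distinct xs \<and> set xs = A \<and> sorted_wrt R xs"
  using assms(1,5)
proof (induction A rule: finite_remove_induct)
  case empty then show ?case by simp
next
  case (remove A)
  have "\<exists>m\<in>A. \<forall>y\<in>A. y \<noteq> m \<longrightarrow> R m y"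
    using \<open>finite A\<close> \<open>A \<noteq> {}\<close> \<open>A \<subseteq> B\<close>
  proof (induction A rule: finite_ne_induct)
    case (singleton x) then show ?case by simp
  next
    case (insert x F)
    then obtain m where m: "m \<in> F" "\<forall>y\<in>F. y \<noteq> m \<longrightarrow> R m y" by auto
    show ?case
    proof (cases "R x m")
      case True
      have "\<forall>y\<in>insert x F. y \<noteq> x \<longrightarrow> R x y"
      proof (intro ballI impI)
        fix y assume y: "y \<in> insert x F" "y \<noteq> x"
        then have yF: "y \<in> F" by simp
        show "R x y"
        proof (cases "y = m")
          case True then show ?thesis using \<open>R x m\<close> by simp
        next
          case False
          then have "R m y" using m yF by blast
          moreover have "x \<in> B" "m \<in> B" "y \<in> B" using insert.prems m(1) yF by auto
          ultimately show ?thesis using assms(3) \<open>R x m\<close> by blast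
        qed
      qed
      then show ?thesis by blast
    next
      case False
      then have "x = m \<or> R m x" using assms(4) insert m by blast
      then show ?thesis using m insert by auto
    qed
  qed
  then obtain m where m: "m \<in> A" "\<forall>y\<in>A. y \<noteq> m \<longrightarrow> R m y" by blast
  obtain xs where xs: "distinct xs" "set xs = A - {m}" "sorted_wrt R xs"
    using remove.IH[OF m(1)] remove.prems by blast
  show ?case using xs m by (intro exI[of _ "m # xs"]) auto
qed



locale T3 =
  fixes V :: "'a set" and E :: "'a set set"
    and p :: nat and s :: "nat \<Rightarrow> 'a" and u :: "nat \<Rightarrow> nat \<Rightarrow> 'a" and k :: "nat \<Rightarrow> nat"
  assumes tree: "is_tree V E"
    and bal: "balanced V E"
    and ht: "tree_height V E = 3"
    and s_inj: "inj_on s {1..p}"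
    and s_V1: "s ` {1..p} = level V E 1"
    and u1: "\<forall>i\<in>{1..p}. nbhd E (s i) \<inter> level V E 2 = {u i 1}"
    and k_def: "\<forall>i\<in>{1..p}. k i = card (nbhd E (s i))"
    and u_leaves: "\<forall>i\<in>{1..p}. inj_on (u i) {2..k i} \<and>
                     u i ` {2..k i} = nbhd E (s i) \<inter> level V E 0"
    and leaf_ex: "\<exists>l. is_leaf V E l"
begin

abbreviation "h \<equiv> vheight V E"

lemma finV: "finite V" using tree unfolding is_tree_def simple_graph_def by auto

lemma edge_in: assumes "{x,y} \<in> E" shows "x \<in> V" "y \<in> V" "x \<noteq> y"
proof -
  obtain a b where "a \<noteq> b" "{x,y} = {a,b}" "a \<in> V" "b \<in> V"
    using tree assms unfolding is_tree_def simple_graph_def by blast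
  then show "x \<in> V" "y \<in> V" "x \<noteq> y" by (auto simp: doubleton_eq_iff)
qed

lemma walk_ex: assumes "x \<in> V" "y \<in> V" shows "\<exists>xs. walk E xs \<and> hd xs = x \<and> last xs = y"
  using tree assms unfolding is_tree_def connected_graph_def by blast

lemma gdist_walk: assumes "x \<in> V" "y \<in> V"
  shows "\<exists>xs. walk E xs \<and> hd xs = x \<and> last xs = y \<and> length xs = gdist E x y + 1"
proof -
  obtain xs where xs: "walk E xs" "hd xs = x" "last xs = y" using walk_ex assms by blast
  then have "xs \<noteq> []" unfolding walk_def by auto
  then have "\<exists>n. \<exists>xs. walk E xs \<and> hd xs = x \<and> last xs = y \<and> length xs = n + 1"
    using xs by (intro exI[of _ "length xs - 1"]) auto
  then show ?thesis unfolding gdist_def by (rule LeastI_ex)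
qed

lemma gdist_le: assumes "walk E xs" "hd xs = x" "last xs = y"
  shows "gdist E x y \<le> length xs - 1"
proof -
  have "xs \<noteq> []" using assms unfolding walk_def by auto
  then show ?thesis unfolding gdist_def using assms
    by (intro Least_le) (rule exI[of _ xs], auto)
qed

lemma h_att: "\<exists>l. is_leaf V E l \<and> gdist E v l = h v"
proof -
  obtain l0 where "is_leaf V E l0" using leaf_ex by blast
  then have "\<exists>n l. is_leaf V E l \<and> gdist E v l = n" by blast
  then show ?thesis unfolding vheight_def by (rule LeastI_ex)
qed

lemma h_le: "is_leaf V E l \<Longrightarrow> h v \<le> gdist E v l"
  unfolding vheight_def by (rule Least_le) blast

lemma lip: assumes "{x,y} \<in> E" shows "h x \<le> h y + 1"
proof -
  obtain l where l: "is_leaf V E l" "gdist E y l = h y" using h_att by blast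
  have yV: "y \<in> V" "x \<in> V" using edge_in assms by auto
  have lV: "l \<in> V" using l unfolding is_leaf_def by auto
  obtain ys where ys: "walk E ys" "hd ys = y" "last ys = l" "length ys = gdist E y l + 1"
    using gdist_walk[OF yV(1) lV] by blast
  have ne: "ys \<noteq> []" using ys by auto
  have "walk E (x # ys)" unfolding walk_def
  proof (intro conjI allI impI)
    fix i assume "i + 1 < length (x # ys)"
    show "{(x # ys) ! i, (x # ys) ! (i + 1)} \<in> E"
    proof (cases i)
      case 0 then show ?thesis using assms ys ne by (simp add: hd_conv_nth)
    next
      case (Suc j) then show ?thesis using ys \<open>i + 1 < length (x # ys)\<close> unfolding walk_def by auto
    qed
  qed simp
  then have "gdist E x l \<le> length (x # ys) - 1" using gdist_le[of "x # ys" x l] ys ne by simp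
  then have "gdist E x l \<le> h y + 1" using ys l by simp
  moreover have "h x \<le> gdist E x l" using h_le l by blast
  ultimately show ?thesis by simp
qed

lemma lip': "{x,y} \<in> E \<Longrightarrow> h y \<le> h x + 1"
  using lip[of y x] by (simp add: insert_commute)

lemma gdist_self: "gdist E l l = 0"
  using gdist_le[of "[l]" l l] unfolding walk_def by simp

lemma leaf_h0: "is_leaf V E l \<Longrightarrow> h l = 0"
  using h_le[of l l] gdist_self by simp

lemma h0_leaf: assumes "v \<in> V" "h v = 0" shows "is_leaf V E v"
proof -
  obtain l where l: "is_leaf V E l" "gdist E v l = 0" using h_att assms by metis
  have lV: "l \<in> V" using l unfolding is_leaf_def by auto
  obtain xs where xs: "walk E xs" "hd xs = v" "last xs = l" "length xs = 1"
    using gdist_walk[OF assms(1) lV] l by auto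
  then have "v = l" by (cases xs) auto
  then show ?thesis using l by simp
qed

lemma h_le3: assumes "v \<in> V" shows "h v \<le> 3"
proof -
  have "h v \<le> Max (h ` V)" using finV assms by simp
  then show ?thesis using ht unfolding tree_height_def by simp
qed

lemma leaf_nbr: assumes "is_leaf V E l" obtains n where "nbhd E l = {n}"
  using assms unfolding is_leaf_def by (metis card_1_singletonE)

lemma nbhd_iff: "x \<in> nbhd E y \<longleftrightarrow> {x,y} \<in> E" unfolding nbhd_def by simp

lemma leaf_nbr_h1: assumes "is_leaf V E l" "{l,n} \<in> E" shows "h n = 1"
proof -
  have "h n \<le> 1" using lip'[OF assms(2)] leaf_h0[OF assms(1)] by simp
  moreover have "h n \<noteq> h l" using bal assms(2) unfolding balanced_def by metis
  ultimately show ?thesis using leaf_h0[OF assms(1)] by simp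
qed

lemma h2_nbr: assumes "v \<in> V" "h v = 2" shows "\<exists>x. {v,x} \<in> E \<and> h x = 1"
proof -
  obtain l where l: "is_leaf V E l" "gdist E v l = 2" using h_att assms by metis
  have lV: "l \<in> V" using l unfolding is_leaf_def by auto
  obtain xs where xs: "walk E xs" "hd xs = v" "last xs = l" "length xs = 3"
    using gdist_walk[OF assms(1) lV] l by auto
  have w: "\<forall>i. i + 1 < length xs \<longrightarrow> {xs ! i, xs ! (i + 1)} \<in> E" using xs(1) unfolding walk_def by blast
  have e1: "{xs!0, xs!1} \<in> E" "{xs!1, xs!2} \<in> E"
    using w[rule_format, of 0] w[rule_format, of 1] xs(4) by (simp_all add: numeral_2_eq_2)
  have ne: "xs \<noteq> []" using xs(4) by auto
  have "xs!0 = v" using xs(2) hd_conv_nth[OF ne] by simp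
  moreover have "xs!2 = l" using xs(3,4) last_conv_nth[OF ne] by simp
  ultimately have e: "{v, xs!1} \<in> E" "{xs!1, l} \<in> E" using e1 by auto
  have "h (xs!1) \<le> 1" using lip[OF e(2)] leaf_h0[OF l(1)] by simp
  moreover have "h v \<le> h (xs!1) + 1" using lip[OF e(1)] .
  ultimately have "h (xs!1) = 1" using assms by simp
  then show ?thesis using e by blast
qed

lemma level_iff: "x \<in> level V E n \<longleftrightarrow> x \<in> V \<and> h x = n" unfolding level_def by simp

lemma s_facts: assumes "i \<in> {1..p}" shows "s i \<in> V" "h (s i) = 1"
  using s_V1 assms unfolding level_def by auto

lemma u1_facts: assumes "i \<in> {1..p}" shows "u i 1 \<in> V" "h (u i 1) = 2" "{u i 1, s i} \<in> E"
  using u1 assms unfolding level_def nbhd_def by auto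

lemma ul_facts: assumes "i \<in> {1..p}" "t \<in> {2..k i}"
  shows "u i t \<in> V" "h (u i t) = 0" "{u i t, s i} \<in> E" "is_leaf V E (u i t)" "nbhd E (u i t) = {s i}"
proof -
  have m: "u i t \<in> nbhd E (s i) \<inter> level V E 0" using u_leaves assms by blast
  then show a: "u i t \<in> V" "h (u i t) = 0" "{u i t, s i} \<in> E" unfolding level_def nbhd_def by auto
  then show lf: "is_leaf V E (u i t)" using h0_leaf by simp
  obtain n where n: "nbhd E (u i t) = {n}" using leaf_nbr[OF lf] by blast
  moreover have "s i \<in> nbhd E (u i t)" using a(3) by (simp add: nbhd_iff insert_commute)
  ultimately show "nbhd E (u i t) = {s i}" by simp
qed

lemma leaf_uniq: assumes "i \<in> {1..p}" "j \<in> {1..p}" "t \<in> {2..k i}" "t' \<in> {2..k j}" "u i t = u j t'"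
  shows "i = j" "t = t'"
proof -
  have "{s i} = {s j}" using ul_facts(5)[OF assms(1,3)] ul_facts(5)[OF assms(2,4)] assms(5) by simp
  then show ij: "i = j" using s_inj assms(1,2) unfolding inj_on_def by blast
  have "inj_on (u i) {2..k i}" using u_leaves assms(1) by blast
  then show "t = t'" using assms(3,4,5) ij unfolding inj_on_def by blast
qed

lemma leaf_ne_u1: assumes "i \<in> {1..p}" "j \<in> {1..p}" "t \<in> {2..k i}" shows "u i t \<noteq> u j 1"
  using ul_facts(2)[OF assms(1,3)] u1_facts(2)[OF assms(2)] by auto

lemma k_ge1: assumes "i \<in> {1..p}" shows "1 \<le> k i"
proof -
  have "nbhd E (s i) \<subseteq> V" using edge_in unfolding nbhd_def by blast
  then have "finite (nbhd E (s i))" using finV by (rule finite_subset)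
  moreover have "u i 1 \<in> nbhd E (s i)" using u1_facts(3)[OF assms] by (simp add: nbhd_iff)
  ultimately have "card (nbhd E (s i)) > 0" by (auto simp: card_gt_0_iff)
  then show ?thesis using k_def assms by simp
qed


definition valid :: "(nat \<Rightarrow> nat) \<Rightarrow> bool" where
  "valid a \<longleftrightarrow> (\<forall>i\<in>{1..p}. 1 \<le> a i \<and> a i \<le> k i)"
definition Dv :: "(nat \<Rightarrow> nat) \<Rightarrow> 'a set" where
  "Dv a = (\<lambda>i. u i (a i)) ` {1..p}"
definition cond2 :: "(nat \<Rightarrow> nat) \<Rightarrow> bool" where
  "cond2 a \<longleftrightarrow> (\<forall>i\<in>{1..p}. \<forall>j\<in>{1..p}. u i 1 = u j 1 \<longrightarrow> a i = 1 \<longrightarrow> a j = 1)"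

lemma nbhd_set_iff: "y \<in> nbhd_set E D \<longleftrightarrow> (\<exists>e\<in>D. {y,e} \<in> E)"
  unfolding nbhd_set_def nbhd_def by auto

lemma va_cases: assumes "valid a" "i \<in> {1..p}"
  obtains "a i = 1" | "a i \<in> {2..k i}"
proof -
  have "1 \<le> a i" "a i \<le> k i" using assms unfolding valid_def by auto
  then show ?thesis using that by (cases "a i = 1") auto
qed

lemma ua_facts: assumes "valid a" "i \<in> {1..p}"
  shows "{u i (a i), s i} \<in> E" "u i (a i) \<in> V" "even (h (u i (a i)))"
  using assms u1_facts[OF assms(2)] ul_facts[OF assms(2)] by (cases rule: va_cases; simp)+

lemma Dv_sub: assumes "valid a" shows "Dv a \<subseteq> V" "Dv a \<subseteq> V_even V E"
  using ua_facts[OF assms] unfolding Dv_def V_even_def by auto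

lemma h_odd: assumes "y \<in> V" "odd (h y)" shows "h y = 1 \<or> h y = 3"
  using h_le3[OF assms(1)] assms(2)
  by presburger

lemma s_nbr_in_Dv: assumes "valid a" "cond2 a" "i \<in> {1..p}" "e \<in> Dv a" "{e, s i} \<in> E"
  shows "e = u i (a i)"
proof -
  obtain j where j: "j \<in> {1..p}" "e = u j (a j)" using assms(4) unfolding Dv_def by blast
  show ?thesis
  proof (cases rule: va_cases[OF assms(1) j(1)])
    case 1
    then have "e \<in> nbhd E (s i) \<inter> level V E 2" using u1_facts[OF j(1)] j assms(5)
      by (simp add: nbhd_iff level_iff)
    then have "u j 1 = u i 1" using u1 assms(3) j 1 by auto
    then have "a i = 1" using assms(2) j(1) assms(3) 1 unfolding cond2_def by blast
    then show ?thesis using \<open>u j 1 = u i 1\<close> j 1 by simp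
  next
    case 2
    have "s i \<in> nbhd E e" using assms(5) by (simp add: nbhd_iff insert_commute)
    then have "s i = s j" using ul_facts(5)[OF j(1) 2] j by simp
    then have "i = j" using s_inj assms(3) j(1) unfolding inj_on_def by blast
    then show ?thesis using j by simp
  qed
qed

lemma K1: assumes "valid a" "level V E 3 \<subseteq> nbhd_set E (Dv a)" "cond2 a"
  shows "minimal_odd_TD_set V E (Dv a)"
proof -
  have otd: "odd_TD_set V E (Dv a)" unfolding odd_TD_set_def
  proof
    show "Dv a \<subseteq> V" using Dv_sub[OF assms(1)] by simp
    show "V_odd V E \<subseteq> nbhd_set E (Dv a)"
    proof
      fix y assume y: "y \<in> V_odd V E"
      then have yV: "y \<in> V" "odd (h y)" unfolding V_odd_def by auto
      show "y \<in> nbhd_set E (Dv a)"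
      proof (cases "h y = 1")
        case True
        then have "y \<in> level V E 1" using yV by (simp add: level_iff)
        then obtain i where i: "i \<in> {1..p}" "y = s i" using s_V1 by (metis imageE)
        have "u i (a i) \<in> Dv a" using i unfolding Dv_def by blast
        moreover have "{y, u i (a i)} \<in> E" using ua_facts(1)[OF assms(1) i(1)] i
          by (simp add: insert_commute)
        ultimately show ?thesis unfolding nbhd_set_iff by blast
      next
        case False
        then have "h y = 3" using h_odd yV by blast
        then show ?thesis using assms(2) yV by (auto simp: level_iff)
      qed
    qed
  qed
  show ?thesis unfolding minimal_odd_TD_set_def
  proof (intro conjI allI impI otd notI)
    fix D' assume D': "D' \<subset> Dv a" "odd_TD_set V E D'"
    then obtain d where d: "d \<in> Dv a" "d \<notin> D'" by blast
    then obtain i where i: "i \<in> {1..p}" "d = u i (a i)" unfolding Dv_def by blast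
    have "s i \<in> V_odd V E" using s_facts[OF i(1)] unfolding V_odd_def by simp
    then have "s i \<in> nbhd_set E D'" using D'(2) unfolding odd_TD_set_def by blast
    then obtain e where e: "e \<in> D'" "{s i, e} \<in> E" by (auto simp: nbhd_set_iff)
    have "e = u i (a i)" using s_nbr_in_Dv[OF assms(1,3) i(1), of e] e D'(1)
      by (auto simp: insert_commute)
    then show False using e d i by simp
  qed
qed

lemma redundant: assumes "minimal_odd_TD_set V E D" "d \<in> D"
  "\<And>y. y \<in> V_odd V E \<Longrightarrow> {y,d} \<in> E \<Longrightarrow> \<exists>e\<in>D-{d}. {y,e} \<in> E"
  shows False
proof -
  have otd: "odd_TD_set V E D" and mn: "\<forall>D'. D' \<subset> D \<longrightarrow> \<not> odd_TD_set V E D'"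
    using assms(1) unfolding minimal_odd_TD_set_def by auto
  have "odd_TD_set V E (D - {d})" unfolding odd_TD_set_def
  proof
    show "D - {d} \<subseteq> V" using otd unfolding odd_TD_set_def by auto
    show "V_odd V E \<subseteq> nbhd_set E (D - {d})"
    proof
      fix y assume y: "y \<in> V_odd V E"
      then have "y \<in> nbhd_set E D" using otd unfolding odd_TD_set_def by blast
      then obtain e where e: "e \<in> D" "{y,e} \<in> E" unfolding nbhd_set_iff by blast
      show "y \<in> nbhd_set E (D - {d})"
      proof (cases "e = d")
        case True then show ?thesis using assms(3)[OF y] e by (auto simp: nbhd_set_iff)
      next
        case False then show ?thesis using e by (auto simp: nbhd_set_iff)
      qed
    qed
  qed
  moreover have "D - {d} \<subset> D" using assms(2) by blast
  ultimately show False using mn by blast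
qed

lemma leaf_redundant: assumes "minimal_odd_TD_set V E D" "l \<in> D" "nbhd E l = {x}"
  "e' \<in> D" "e' \<noteq> l" "{x, e'} \<in> E" shows False
proof (rule redundant[OF assms(1,2)])
  fix y assume "{y, l} \<in> E"
  then have "y \<in> nbhd E l" by (simp add: nbhd_iff)
  then have "y = x" using assms(3) by simp
  then show "\<exists>e\<in>D - {l}. {y, e} \<in> E" using assms(4,5,6) by blast
qed

lemma K2: assumes "valid a" "minimal_odd_TD_set V E (Dv a)"
  shows "level V E 3 \<subseteq> nbhd_set E (Dv a)" "cond2 a"
proof -
  have "level V E 3 \<subseteq> V_odd V E" unfolding level_def V_odd_def by auto
  then show "level V E 3 \<subseteq> nbhd_set E (Dv a)" using assms(2)
    unfolding minimal_odd_TD_set_def odd_TD_set_def by blast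
  show "cond2 a" unfolding cond2_def
  proof (intro ballI impI)
    fix i j assume ij: "i \<in> {1..p}" "j \<in> {1..p}" "u i 1 = u j 1" "a i = 1"
    show "a j = 1"
    proof (rule ccontr)
      assume "a j \<noteq> 1"
      moreover have "1 \<le> a j" "a j \<le> k j" using assms(1) ij(2) unfolding valid_def by auto
      ultimately have t: "a j \<in> {2..k j}" by simp
      show False
      proof (rule leaf_redundant[OF assms(2), of "u j (a j)" "s j" "u i 1"])
        show "u j (a j) \<in> Dv a" using ij unfolding Dv_def by blast
        show "nbhd E (u j (a j)) = {s j}" using ul_facts(5)[OF ij(2) t] .
        show "u i 1 \<in> Dv a" using ij unfolding Dv_def by (metis image_eqI)
        show "u i 1 \<noteq> u j (a j)" using leaf_ne_u1[OF ij(2,1) t] by simp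
        show "{s j, u i 1} \<in> E" using u1_facts(3)[OF ij(2)] ij(3) by (simp add: insert_commute)
      qed
    qed
  qed
qed


lemma odd_nbr_even: assumes "{x,y} \<in> E" "odd (h x)" shows "even (h y)"
proof (rule ccontr)
  assume oy: "odd (h y)"
  have "h x \<noteq> h y" using bal assms(1) unfolding balanced_def by blast
  moreover have "h x \<le> h y + 1" "h y \<le> h x + 1" using lip[OF assms(1)] lip'[OF assms(1)] by auto
  ultimately show False using assms(2) oy by presburger
qed

lemma K3_even: assumes "minimal_odd_TD_set V E D" "d \<in> D" shows "d \<in> V" "even (h d)"
proof -
  show dV: "d \<in> V" using assms unfolding minimal_odd_TD_set_def odd_TD_set_def by blast
  show "even (h d)"
  proof (rule ccontr)
    assume od: "odd (h d)"
    show False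
    proof (rule redundant[OF assms])
      fix y assume y: "y \<in> V_odd V E" "{y, d} \<in> E"
      have "odd (h y)" using y unfolding V_odd_def by auto
      then have "even (h d)" using odd_nbr_even[OF y(2)] by blast
      then show "\<exists>e\<in>D - {d}. {y, e} \<in> E" using od by blast
    qed
  qed
qed

lemma s_odd: "i \<in> {1..p} \<Longrightarrow> s i \<in> V_odd V E"
  using s_facts unfolding V_odd_def by simp

lemma nbr_s_cases: assumes "i \<in> {1..p}" "{s i, e} \<in> E" "even (h e)"
  shows "\<exists>t. 1 \<le> t \<and> t \<le> k i \<and> e = u i t"
proof -
  have eV: "e \<in> V" using edge_in assms(2) by auto
  have "h e \<le> 2" using lip'[OF assms(2)] s_facts[OF assms(1)] by simp
  then have "h e = 0 \<or> h e = 2" using assms(3) by presburger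
  then show ?thesis
  proof
    assume "h e = 0"
    then have "e \<in> nbhd E (s i) \<inter> level V E 0" using eV assms(2)
      by (simp add: level_iff nbhd_iff insert_commute)
    then have "e \<in> u i ` {2..k i}" using u_leaves assms(1) by blast
    then obtain t where "t \<in> {2..k i}" "e = u i t" by blast
    then show ?thesis by (intro exI[of _ t]) auto
  next
    assume "h e = 2"
    then have "e \<in> nbhd E (s i) \<inter> level V E 2" using eV assms(2)
      by (simp add: level_iff nbhd_iff insert_commute)
    then have "e = u i 1" using u1 assms(1) by blast
    then show ?thesis using k_ge1[OF assms(1)] by blast
  qed
qed

lemma K3_uniq: assumes "minimal_odd_TD_set V E D" "i \<in> {1..p}"
  "1 \<le> t" "t \<le> k i" "1 \<le> t'" "t' \<le> k i" "u i t \<in> D" "u i t' \<in> D"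
  shows "u i t = u i t'"
proof (rule ccontr)
  assume ne: "u i t \<noteq> u i t'"
  have "\<not> (t = 1 \<and> t' = 1)" using ne by auto
  then have "t \<in> {2..k i} \<or> t' \<in> {2..k i}" using assms by auto
  then show False
  proof
    assume t: "t \<in> {2..k i}"
    show False
    proof (rule leaf_redundant[OF assms(1) assms(7) ul_facts(5)[OF assms(2) t] assms(8)])
      show "u i t' \<noteq> u i t" using ne by simp
      show "{s i, u i t'} \<in> E"
      proof (cases "t' = 1")
        case True then show ?thesis using u1_facts(3)[OF assms(2)] by (simp add: insert_commute)
      next
        case False then have "t' \<in> {2..k i}" using assms by auto
        then show ?thesis using ul_facts(3)[OF assms(2)] by (simp add: insert_commute)
      qed
    qed
  next
    assume t: "t' \<in> {2..k i}"
    show False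
    proof (rule leaf_redundant[OF assms(1) assms(8) ul_facts(5)[OF assms(2) t] assms(7)])
      show "u i t \<noteq> u i t'" using ne by simp
      show "{s i, u i t} \<in> E"
      proof (cases "t = 1")
        case True then show ?thesis using u1_facts(3)[OF assms(2)] by (simp add: insert_commute)
      next
        case False then have "t \<in> {2..k i}" using assms by auto
        then show ?thesis using ul_facts(3)[OF assms(2)] by (simp add: insert_commute)
      qed
    qed
  qed
qed

lemma K3: assumes "minimal_odd_TD_set V E D" shows "\<exists>a. valid a \<and> D = Dv a"
proof -
  have ex: "\<exists>t. 1 \<le> t \<and> t \<le> k i \<and> u i t \<in> D" if i: "i \<in> {1..p}" for i
  proof -
    have "s i \<in> nbhd_set E D" using s_odd[OF i] assms
      unfolding minimal_odd_TD_set_def odd_TD_set_def by blast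
    then obtain e where e: "e \<in> D" "{s i, e} \<in> E" unfolding nbhd_set_iff by blast
    then show ?thesis using nbr_s_cases[OF i e(2) K3_even(2)[OF assms e(1)]] by blast
  qed
  define a where "a i = (SOME t. 1 \<le> t \<and> t \<le> k i \<and> u i t \<in> D)" for i
  have a: "1 \<le> a i \<and> a i \<le> k i \<and> u i (a i) \<in> D" if "i \<in> {1..p}" for i
    unfolding a_def using someI_ex[OF ex[OF that]] .
  have va: "valid a" unfolding valid_def using a by blast
  have "D = Dv a"
  proof
    show "Dv a \<subseteq> D" unfolding Dv_def using a by blast
    show "D \<subseteq> Dv a"
    proof
      fix d assume d: "d \<in> D"
      have dV: "d \<in> V" and ev: "even (h d)" using K3_even[OF assms d] by auto
      have "\<exists>i\<in>{1..p}. {s i, d} \<in> E"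
      proof -
        have "h d \<le> 3" using h_le3[OF dV] .
        then have "h d = 0 \<or> h d = 2" using ev by presburger
        then obtain x where x: "{d, x} \<in> E" "h x = 1"
        proof
          assume h0: "h d = 0"
          then have lf: "is_leaf V E d" using h0_leaf dV by simp
          obtain n where n: "nbhd E d = {n}" using leaf_nbr[OF lf] by blast
          then have "{n, d} \<in> E" by (auto simp: nbhd_iff)
          then have "{d, n} \<in> E" by (simp add: insert_commute)
          then show thesis using that leaf_nbr_h1[OF lf] by blast
        next
          assume "h d = 2"
          then show thesis using h2_nbr[OF dV] that by blast
        qed
        have "x \<in> V" using edge_in x(1) by auto
        then have "x \<in> level V E 1" using x(2) by (simp add: level_iff)
        then obtain i where "i \<in> {1..p}" "x = s i" using s_V1 by (metis imageE)
        then show ?thesis using x(1) by (metis insert_commute)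
      qed
      then obtain i where i: "i \<in> {1..p}" "{s i, d} \<in> E" by blast
      obtain t where t: "1 \<le> t" "t \<le> k i" "d = u i t" using nbr_s_cases[OF i ev] by blast
      have "d = u i (a i)" using K3_uniq[OF assms i(1) t(1,2), of "a i"] a[OF i(1)] t d by simp
      then show "d \<in> Dv a" using i unfolding Dv_def by blast
    qed
  qed
  then show ?thesis using va by blast
qed

lemma K4a: assumes "valid a" "valid b" "i \<in> {1..p}" "a i \<in> {2..k i}" "u i (a i) \<in> Dv b"
  shows "b i = a i"
proof -
  obtain j where j: "j \<in> {1..p}" "u i (a i) = u j (b j)" using assms(5) unfolding Dv_def by blast
  show ?thesis
  proof (cases rule: va_cases[OF assms(2) j(1)])
    case 1 then show ?thesis using leaf_ne_u1[OF assms(3) j(1) assms(4)] j by simp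
  next
    case 2 then show ?thesis using leaf_uniq[OF assms(3) j(1) assms(4) 2 j(2)] by simp
  qed
qed

lemma K4: assumes "valid a" "valid b" "Dv a = Dv b" "i \<in> {1..p}" shows "a i = b i"
proof (cases rule: va_cases[OF assms(1) assms(4)])
  case 1
  show ?thesis
  proof (cases rule: va_cases[OF assms(2) assms(4)])
    case 2
    have "u i (b i) \<in> Dv a" using assms(3,4) unfolding Dv_def by blast
    then show ?thesis using K4a[OF assms(2,1,4) 2] by simp
  qed (use 1 in simp)
next
  case 2
  have "u i (a i) \<in> Dv b" using assms(3,4) unfolding Dv_def by blast
  then show ?thesis using K4a[OF assms(1,2,4) 2] by simp
qed


lemma cov: assumes "valid g" "valid b" "level V E 3 \<subseteq> nbhd_set E (Dv b)"
  "\<forall>i\<in>{1..p}. b i = 1 \<longrightarrow> g i = 1"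
  shows "level V E 3 \<subseteq> nbhd_set E (Dv g)"
proof
  fix y assume y: "y \<in> level V E 3"
  then have "y \<in> nbhd_set E (Dv b)" using assms(3) by blast
  then obtain e where e: "e \<in> Dv b" "{y, e} \<in> E" unfolding nbhd_set_iff by blast
  then obtain i where i: "i \<in> {1..p}" "e = u i (b i)" unfolding Dv_def by blast
  show "y \<in> nbhd_set E (Dv g)"
  proof (cases rule: va_cases[OF assms(2) i(1)])
    case 1
    then have "g i = 1" using assms(4) i by blast
    have "u i (g i) \<in> Dv g" using i(1) unfolding Dv_def by (rule imageI)
    then have "e \<in> Dv g" using i 1 \<open>g i = 1\<close> by simp
    then show ?thesis using e unfolding nbhd_set_iff by blast
  next
    case 2
    have "y \<in> nbhd E e" using e(2) by (simp add: nbhd_iff)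
    then have "y = s i" using ul_facts(5)[OF i(1) 2] i by simp
    then show ?thesis using y s_facts[OF i(1)] by (simp add: level_iff)
  qed
qed

lemma K6: assumes va: "valid al" and vb: "valid be"
  and ma: "minimal_odd_TD_set V E (Dv al)" and mb: "minimal_odd_TD_set V E (Dv be)"
  and lt: "P_less p al be"
  shows "\<exists>g. valid g \<and> minimal_odd_TD_set V E (Dv g) \<and> P_less p g be \<and>
           (\<exists>v. v \<in> Dv al - Dv be \<and> Dv g - Dv be = {v})"
proof -
  have L3: "level V E 3 \<subseteq> nbhd_set E (Dv be)" and c2: "cond2 be" using K2[OF vb mb] by auto
  show ?thesis
  proof (cases "\<exists>m\<in>{1..p}. al m = 1 \<and> be m \<noteq> 1")
    case True
    then obtain m where m: "m \<in> {1..p}" "al m = 1" "be m \<noteq> 1" by blast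
    define g where "g i = (if u i 1 = u m 1 then 1 else be i)" for i
    have vg: "valid g" using vb k_ge1 unfolding valid_def g_def by auto
    have bg: "\<forall>i\<in>{1..p}. be i = 1 \<longrightarrow> g i = 1" unfolding g_def by auto
    have c2g: "cond2 g" unfolding cond2_def
    proof (intro ballI impI)
      fix i j assume ij: "i \<in> {1..p}" "j \<in> {1..p}" "u i 1 = u j 1" "g i = 1"
      show "g j = 1"
      proof (cases "u i 1 = u m 1")
        case True then show ?thesis using ij unfolding g_def by simp
      next
        case False
        then have "be i = 1" using ij(4) unfolding g_def by simp
        then have "be j = 1" using c2 ij(1-3) unfolding cond2_def by blast
        then show ?thesis unfolding g_def by simp
      qed
    qed
    have mg: "minimal_odd_TD_set V E (Dv g)"
      using K1[OF vg cov[OF vg vb L3 bg] c2g] .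
    have um_in: "u m 1 \<in> Dv g" using m(1) unfolding Dv_def g_def by (auto intro!: image_eqI[of _ _ m])
    have um_nin: "u m 1 \<notin> Dv be"
    proof
      assume "u m 1 \<in> Dv be"
      then obtain j where j: "j \<in> {1..p}" "u m 1 = u j (be j)" unfolding Dv_def by blast
      show False
      proof (cases rule: va_cases[OF vb j(1)])
        case 1
        then have "u j 1 = u m 1" using j(2) by simp
        then have "be m = 1" using c2 j(1) m(1) 1 unfolding cond2_def by blast
        then show False using m by simp
      next
        case 2 then show False using leaf_ne_u1[OF j(1) m(1) 2] j by simp
      qed
    qed
    have diff: "Dv g - Dv be = {u m 1}"
    proof
      show "{u m 1} \<subseteq> Dv g - Dv be" using um_in um_nin by blast
      show "Dv g - Dv be \<subseteq> {u m 1}"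
      proof
        fix x assume x: "x \<in> Dv g - Dv be"
        then obtain i where i: "i \<in> {1..p}" "x = u i (g i)" unfolding Dv_def by blast
        show "x \<in> {u m 1}"
        proof (cases "u i 1 = u m 1")
          case True then show ?thesis using i unfolding g_def by simp
        next
          case False
          then have "x = u i (be i)" using i unfolding g_def by simp
          then have "x \<in> Dv be" using i(1) unfolding Dv_def by blast
          then show ?thesis using x by blast
        qed
      qed
    qed
    have "u m (al m) \<in> Dv al" using m(1) unfolding Dv_def by (rule imageI)
    then have "u m 1 \<in> Dv al" using m(2) by simp
    moreover have "P_less p g be"
    proof -
      have "{i \<in> {1..p}. be i = 1} \<subset> {i \<in> {1..p}. g i = 1}"
        using bg m unfolding g_def by auto
      then have "card {i \<in> {1..p}. be i = 1} < card {i \<in> {1..p}. g i = 1}"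
        by (rule psubset_card_mono[rotated]) simp
      then show ?thesis unfolding P_less_def ell_def by simp
    qed
    ultimately have "u m 1 \<in> Dv al - Dv be" "P_less p g be" using um_nin by auto
    then show ?thesis using vg mg diff by (intro exI[of _ g]) blast
  next
    case False
    then have ab: "\<forall>i\<in>{1..p}. al i = 1 \<longrightarrow> be i = 1" by blast
    then have "{i \<in> {1..p}. al i = 1} \<subseteq> {i \<in> {1..p}. be i = 1}" by blast
    then have "ell p al \<le> ell p be" unfolding ell_def by (rule card_mono[rotated]) simp
    then have "lex_less p al be" using lt unfolding P_less_def by simp
    then obtain j where j: "j \<in> {1..p}" "\<forall>i\<in>{1..<j}. al i = be i" "al j < be j"
      unfolding lex_less_def by blast
    have "1 \<le> al j" "be j \<le> k j" using va vb j(1) unfolding valid_def by auto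
    moreover have "al j \<noteq> 1" using ab j by auto
    ultimately have aj: "al j \<in> {2..k j}" and bj: "be j \<noteq> 1" using j(3) by auto
    define g where "g = be(j := al j)"
    have vg: "valid g" using vb va j(1) unfolding valid_def g_def by auto
    have bg: "\<forall>i\<in>{1..p}. be i = 1 \<longrightarrow> g i = 1" using bj unfolding g_def by auto
    have c2g: "cond2 g" unfolding cond2_def
    proof (intro ballI impI)
      fix i i' assume ii: "i \<in> {1..p}" "i' \<in> {1..p}" "u i 1 = u i' 1" "g i = 1"
      have "i \<noteq> j" using ii(4) aj unfolding g_def by auto
      then have "be i = 1" using ii(4) unfolding g_def by simp
      then have "be i' = 1" using c2 ii(1-3) unfolding cond2_def by blast
      then show "g i' = 1" using bg ii(2) by blast
    qed
    have mg: "minimal_odd_TD_set V E (Dv g)"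
      using K1[OF vg cov[OF vg vb L3 bg] c2g] .
    have v_in: "u j (al j) \<in> Dv g" using j(1) unfolding Dv_def g_def by (auto intro!: image_eqI[of _ _ j])
    have v_nin: "u j (al j) \<notin> Dv be"
    proof
      assume "u j (al j) \<in> Dv be"
      then have "be j = al j" using K4a[OF va vb j(1) aj] by simp
      then show False using j(3) by simp
    qed
    have diff: "Dv g - Dv be = {u j (al j)}"
    proof
      show "{u j (al j)} \<subseteq> Dv g - Dv be" using v_in v_nin by blast
      show "Dv g - Dv be \<subseteq> {u j (al j)}"
      proof
        fix x assume x: "x \<in> Dv g - Dv be"
        then obtain i where i: "i \<in> {1..p}" "x = u i (g i)" unfolding Dv_def by blast
        show "x \<in> {u j (al j)}"
        proof (cases "i = j")
          case True then show ?thesis using i unfolding g_def by simp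
        next
          case False
          then have "x = u i (be i)" using i unfolding g_def by simp
          then have "x \<in> Dv be" using i(1) unfolding Dv_def by blast
          then show ?thesis using x by blast
        qed
      qed
    qed
    have "u j (al j) \<in> Dv al" using j(1) unfolding Dv_def by (rule imageI)
    moreover have "P_less p g be"
    proof -
      have "{i \<in> {1..p}. g i = 1} = {i \<in> {1..p}. be i = 1}"
        using aj bj unfolding g_def by auto
      then have "ell p g = ell p be" unfolding ell_def by simp
      moreover have "lex_less p g be" unfolding lex_less_def
        using j unfolding g_def by (intro bexI[of _ j]) auto
      ultimately show ?thesis unfolding P_less_def by simp
    qed
    ultimately have "u j (al j) \<in> Dv al - Dv be" "P_less p g be" using v_nin by auto
    then show ?thesis using vg mg diff by (intro exI[of _ g]) blast
  qed
qed


lemma Dv_eq: assumes "valid a" "valid b" "V_even V E - Dv a = V_even V E - Dv b" shows "Dv a = Dv b"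
  using Dv_sub(2)[OF assms(1)] Dv_sub(2)[OF assms(2)] assms(3) by blast

lemma rep: assumes "F \<in> S_even_facets V E"
  shows "\<exists>a. valid a \<and> minimal_odd_TD_set V E (Dv a) \<and> F = V_even V E - Dv a"
proof -
  obtain D where D: "F = V_even V E - D" "minimal_odd_TD_set V E D"
    using assms unfolding S_even_facets_def by blast
  obtain a where "valid a" "D = Dv a" using K3[OF D(2)] by blast
  then show ?thesis using D by blast
qed

lemma main:
  shows "(\<forall>F\<in>S_even_facets V E. \<exists>a. (\<forall>i\<in>{1..p}. 1 \<le> a i \<and> a i \<le> k i) \<and>
            F = V_even V E - (\<lambda>i. u i (a i)) ` {1..p})
       \<and> (let nu_less = (\<lambda>F G. \<exists>a b.
                 (\<forall>i\<in>{1..p}. 1 \<le> a i \<and> a i \<le> k i) \<and> (\<forall>i\<in>{1..p}. 1 \<le> b i \<and> b i \<le> k i) \<and>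
                 F = V_even V E - (\<lambda>i. u i (a i)) ` {1..p} \<and>
                 G = V_even V E - (\<lambda>i. u i (b i)) ` {1..p} \<and> P_less p a b)
          in (\<exists>Fs. distinct Fs \<and> set Fs = S_even_facets V E \<and> sorted_wrt nu_less Fs)
           \<and> (\<forall>Fs. distinct Fs \<and> set Fs = S_even_facets V E \<and> sorted_wrt nu_less Fs
                  \<longrightarrow> shelling_order Fs))"
proof -
  let ?A = "S_even_facets V E"
  define NU where "NU = (\<lambda>F G. \<exists>a b.
                 (\<forall>i\<in>{1..p}. 1 \<le> a i \<and> a i \<le> k i) \<and> (\<forall>i\<in>{1..p}. 1 \<le> b i \<and> b i \<le> k i) \<and>
                 F = V_even V E - (\<lambda>i. u i (a i)) ` {1..p} \<and>
                 G = V_even V E - (\<lambda>i. u i (b i)) ` {1..p} \<and> P_less p a b)"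
  have NU_alt: "NU F G \<longleftrightarrow> (\<exists>a b. valid a \<and> valid b \<and> F = V_even V E - Dv a \<and>
      G = V_even V E - Dv b \<and> P_less p a b)" for F G
    unfolding NU_def valid_def Dv_def by simp
  have NU_iff: "NU (V_even V E - Dv a) (V_even V E - Dv b) \<longleftrightarrow> P_less p a b"
    if va: "valid a" and vb: "valid b" for a b
  proof
    assume "NU (V_even V E - Dv a) (V_even V E - Dv b)"
    then obtain a' b' where ab: "valid a'" "valid b'" "V_even V E - Dv a = V_even V E - Dv a'"
      "V_even V E - Dv b = V_even V E - Dv b'" "P_less p a' b'" unfolding NU_alt by blast
    have "Dv a = Dv a'" using Dv_eq[OF va ab(1) ab(3)] .
    then have 1: "\<forall>i\<in>{1..p}. a i = a' i" using K4[OF va ab(1)] by blast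
    have "Dv b = Dv b'" using Dv_eq[OF vb ab(2) ab(4)] .
    then have 2: "\<forall>i\<in>{1..p}. b i = b' i" using K4[OF vb ab(2)] by blast
    note 1 2
    then show "P_less p a b" using P_less_cong ab(5) by blast
  next
    assume "P_less p a b" then show "NU (V_even V E - Dv a) (V_even V E - Dv b)"
      unfolding NU_alt using va vb by blast
  qed
  have part1: "\<forall>F\<in>?A. \<exists>a. (\<forall>i\<in>{1..p}. 1 \<le> a i \<and> a i \<le> k i) \<and>
            F = V_even V E - (\<lambda>i. u i (a i)) ` {1..p}"
    using rep unfolding valid_def Dv_def by blast
  have finA: "finite ?A"
  proof -
    have "?A \<subseteq> Pow V" unfolding S_even_facets_def V_even_def by auto
    moreover have "finite (Pow V)" using finV by simp
    ultimately show ?thesis by (rule finite_subset)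
  qed
  have irr: "\<forall>x\<in>?A. \<not> NU x x"
  proof
    fix F assume "F \<in> ?A"
    then obtain a where "valid a" "F = V_even V E - Dv a" using rep by blast
    then show "\<not> NU F F" using NU_iff[of a a] P_irrefl[of p a] by simp
  qed
  have tr: "\<forall>x\<in>?A. \<forall>y\<in>?A. \<forall>z\<in>?A. NU x y \<longrightarrow> NU y z \<longrightarrow> NU x z"
  proof (intro ballI impI)
    fix F G H assume FGH: "F \<in> ?A" "G \<in> ?A" "H \<in> ?A" "NU F G" "NU G H"
    obtain a where a: "valid a" "F = V_even V E - Dv a" using rep FGH(1) by blast
    obtain b where b: "valid b" "G = V_even V E - Dv b" using rep FGH(2) by blast
    obtain c where c: "valid c" "H = V_even V E - Dv c" using rep FGH(3) by blast
    have "P_less p a b" using NU_iff[OF a(1) b(1)] a(2) b(2) FGH(4) by simp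
    moreover have "P_less p b c" using NU_iff[OF b(1) c(1)] b(2) c(2) FGH(5) by simp
    ultimately have "P_less p a b" "P_less p b c" by auto
    then have "P_less p a c" by (rule P_trans)
    then show "NU F H" using NU_iff[OF a(1) c(1)] a(2) c(2) by simp
  qed
  have tot: "\<forall>x\<in>?A. \<forall>y\<in>?A. x \<noteq> y \<longrightarrow> NU x y \<or> NU y x"
  proof (intro ballI impI)
    fix F G assume FG: "F \<in> ?A" "G \<in> ?A" "F \<noteq> G"
    obtain a where a: "valid a" "F = V_even V E - Dv a" using rep FG(1) by blast
    obtain b where b: "valid b" "G = V_even V E - Dv b" using rep FG(2) by blast
    have "\<exists>i\<in>{1..p}. a i \<noteq> b i"
    proof (rule ccontr)
      assume "\<not> (\<exists>i\<in>{1..p}. a i \<noteq> b i)"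
      then have "Dv a = Dv b" unfolding Dv_def by auto
      then show False using a b FG(3) by simp
    qed
    then have "P_less p a b \<or> P_less p b a" by (rule P_total)
    then show "NU F G \<or> NU G F" using NU_iff[OF a(1) b(1)] NU_iff[OF b(1) a(1)] a(2) b(2) by simp
  qed
  have ex: "\<exists>Fs. distinct Fs \<and> set Fs = ?A \<and> sorted_wrt NU Fs"
    using sort_exists[OF finA irr tr tot] by simp
  have sh: "shelling_order Fs" if Fs: "distinct Fs" "set Fs = ?A" "sorted_wrt NU Fs" for Fs
    unfolding shelling_order_def
  proof (intro allI impI)
    fix i j assume ij: "i < j \<and> j < length Fs"
    have "Fs ! i \<in> set Fs" "Fs ! j \<in> set Fs" using ij by auto
    then have "Fs ! i \<in> ?A" "Fs ! j \<in> ?A" unfolding Fs(2) by auto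
    obtain al where al: "valid al" "minimal_odd_TD_set V E (Dv al)" "Fs ! i = V_even V E - Dv al"
      using rep \<open>Fs ! i \<in> ?A\<close> by blast
    obtain be where be: "valid be" "minimal_odd_TD_set V E (Dv be)" "Fs ! j = V_even V E - Dv be"
      using rep \<open>Fs ! j \<in> ?A\<close> by blast
    have "NU (Fs ! i) (Fs ! j)" using sorted_wrt_nth_less[OF Fs(3), of i j] ij by blast
    then have lt: "P_less p al be" using NU_iff[OF al(1) be(1)] al(3) be(3) by simp
    obtain g v where g: "valid g" "minimal_odd_TD_set V E (Dv g)" "P_less p g be"
      "v \<in> Dv al - Dv be" "Dv g - Dv be = {v}" using K6[OF al(1) be(1) al(2) be(2) lt] by blast
    have "V_even V E - Dv g \<in> ?A" unfolding S_even_facets_def using g(2) by blast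
    then have "V_even V E - Dv g \<in> set Fs" using Fs(2) by simp
    then obtain kk where kk: "kk < length Fs" "Fs ! kk = V_even V E - Dv g"
      by (auto simp: in_set_conv_nth)
    have "kk \<noteq> j"
    proof
      assume "kk = j"
      then have "V_even V E - Dv g = V_even V E - Dv be" using kk(2) be(3) by simp
      then have "Dv g = Dv be" using Dv_eq[OF g(1) be(1)] by simp
      then show False using g(5) by simp
    qed
    moreover have "\<not> j < kk"
    proof
      assume "j < kk"
      then have "NU (Fs ! j) (Fs ! kk)" using sorted_wrt_nth_less[OF Fs(3), of j kk] kk by blast
      then have "P_less p be g" using NU_iff[OF be(1) g(1)] be(3) kk(2) by simp
      then show False using P_asym g(3) by blast
    qed
    ultimately have kj: "kk < j" by simp
    have vE: "v \<in> V_even V E" using g(4) Dv_sub(2)[OF al(1)] by blast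
    have "v \<in> Fs ! j - Fs ! i" using al(3) be(3) g(4) vE by blast
    moreover have "Fs ! j - Fs ! kk = {v}"
      using be(3) kk(2) g(5) Dv_sub(2)[OF g(1)] by blast
    ultimately show "\<exists>v\<in>Fs ! j - Fs ! i. \<exists>k<j. Fs ! j - Fs ! k = {v}" using kj by blast
  qed
  show ?thesis unfolding Let_def NU_def[symmetric] using part1 ex sh by blast
qed

end
theorem theorem4p22:
  fixes V :: "'a set" and E :: "'a set set"
    and p :: nat and s :: "nat \<Rightarrow> 'a" and u :: "nat \<Rightarrow> nat \<Rightarrow> 'a" and k :: "nat \<Rightarrow> nat"
  assumes tree: "is_tree V E"
    and unm: "unmixed V E"
    and bal: "balanced V E"
    and ht: "tree_height V E = 3"
    and s_inj: "inj_on s {1..p}"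
    and s_V1: "s ` {1..p} = level V E 1"
    and u1: "\<forall>i\<in>{1..p}. nbhd E (s i) \<inter> level V E 2 = {u i 1}"
    and k_def: "\<forall>i\<in>{1..p}. k i = card (nbhd E (s i))"
    and u_leaves: "\<forall>i\<in>{1..p}. inj_on (u i) {2..k i} \<and>
                     u i ` {2..k i} = nbhd E (s i) \<inter> level V E 0"
  shows "(\<forall>F\<in>S_even_facets V E. \<exists>a. (\<forall>i\<in>{1..p}. 1 \<le> a i \<and> a i \<le> k i) \<and>
            F = V_even V E - (\<lambda>i. u i (a i)) ` {1..p})
       \<and> (let nu_less = (\<lambda>F G. \<exists>a b.
                 (\<forall>i\<in>{1..p}. 1 \<le> a i \<and> a i \<le> k i) \<and> (\<forall>i\<in>{1..p}. 1 \<le> b i \<and> b i \<le> k i) \<and>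
                 F = V_even V E - (\<lambda>i. u i (a i)) ` {1..p} \<and>
                 G = V_even V E - (\<lambda>i. u i (b i)) ` {1..p} \<and> P_less p a b)
          in (\<exists>Fs. distinct Fs \<and> set Fs = S_even_facets V E \<and> sorted_wrt nu_less Fs)
           \<and> (\<forall>Fs. distinct Fs \<and> set Fs = S_even_facets V E \<and> sorted_wrt nu_less Fs
                  \<longrightarrow> shelling_order Fs))"
proof (cases "\<exists>l. is_leaf V E l")
  case True
  interpret T3 V E p s u k using tree bal ht s_inj s_V1 u1 k_def u_leaves True by unfold_locales
  show ?thesis by (rule main)
next
  case False
  have hc: "\<And>v. vheight V E v = (LEAST n. False)" unfolding vheight_def using False by simp
  have empty: "S_even_facets V E = {}"
  proof -
    have fin: "finite V" and ne: "V \<noteq> {}" using tree unfolding is_tree_def simple_graph_def by auto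
    have "Max (vheight V E ` V) \<in> vheight V E ` V" using fin ne by (intro Max_in) auto
    then obtain v where v: "v \<in> V" "vheight V E v = 3" using ht unfolding tree_height_def by auto
    have vo: "v \<in> V_odd V E" unfolding V_odd_def using v by simp
    have nm: False if D: "minimal_odd_TD_set V E D" for D
    proof -
      have "v \<in> nbhd_set E D" using vo D unfolding minimal_odd_TD_set_def odd_TD_set_def by blast
      then obtain e where e: "{v,e} \<in> E" unfolding nbhd_set_def nbhd_def by auto
      have "vheight V E v \<noteq> vheight V E e" using bal e unfolding balanced_def by blast
      then show False using hc by simp
    qed
    then show ?thesis unfolding S_even_facets_def by blast
  qed
  show ?thesis unfolding Let_def empty by (auto simp: shelling_order_def intro!: exI[of _ "[]"])
qed

end
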